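(* Let $F$ be a CNF formula and let $\pi$ be a refutation of $F$ (a derivation $\pi$ from $F$ using instructions $\mathrm{del}$, $\mathrm{rup}$, $\mathrm{sr}$, $\mathrm{wsr}$ with $\vdash_\bot\mathrm{acc}(F,\pi)$). Then $\mathcal{T}(F,\pi):F\triangleright\{\bot\}$, i.e.\ the proof term $\mathcal{T}(F,\pi)$ derives the dynamic formula $\{[\,].\bot\}$ from the dynamic formula $\{[\,].C:C\in F\}$.
   Context: CNF setting: literals $x,\neg x,\top,\bot$ with complements; substitutions $\sigma$ on literals with $\sigma(\top)=\top$, $\sigma(\overline l)=\overline{\sigma(l)}$ (finite if identity on almost all variables); $(I\circ\sigma)(x)=1$ iff $I\vDash\sigma(x)$. Static constraints are clauses $l_1\vee\dots\vee l_n$ and cubes $l_1\wedge\dots\wedge l_n$, negated by De Morgan duality (swapping $\vee,\wedge$ and complementing literals), with reducts applying $\sigma$ literalwise; $\bot$ denotes the unit clause $\bot$. A CNF formula is a finite set of static constraints. Conflict detection $\vdash_\bot F$ is unit propagation: with $U(F)$ the least set of literals containing $\top$, all literals of cubes in $F$, and $l_i$ whenever $l_1\vee\dots\vee l_n\in F$ and $\overline{l_j}\in U(F)$ for all $j\ne i$, $\vdash_\bot F$ holds iff $\bot\in U(F)$, or $x,\neg x\in U(F)$ for some variable $x$, or some clause of $F$ has all its literals' complements in $U(F)$. RUP/SR/WSR: $C$ is RUP over $F$ if $\vdash_\bot F\cup\{\overline C\}$; SR over $F$ upon $\sigma$ if $\vdash_\bot\{\overline{C[\sigma]}\}$ and $\vdash_\bot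 F\cup\{\overline C,\overline{D[\sigma]}\}$ for all $D\in F$; WSR over $F$ upon $\sigma$ modulo $G$ if $\vdash_\bot F\cup\{\overline C,\overline{D[\sigma]}\}$ for all $D\in(F\setminus G)\cup\{C\}$. Accumulated formula: $\mathrm{acc}(F,[\,])=F$; $\mathrm{del}(C)$ removes $C$; $\mathrm{rup}(C)$, $\mathrm{sr}(C,\sigma)$ add $C$; $\mathrm{wsr}(C,\sigma,G)$ removes $G$ then adds $C$. A derivation from $F$ is an instruction list where each $\mathrm{rup}$/$\mathrm{sr}$/$\mathrm{wsr}$ instruction's clause is RUP/SR upon $\sigma$/WSR upon $\sigma$ modulo $G$ over the accumulated formula before it ($\mathrm{del}$ always allowed). Programs, dynamic constraints/formulas, $\vdash_{\mathrm{dyn}}$, and proof terms with the relation $\pi:\varGamma\triangleright\varDelta$ are as follows. Program items: $\langle\sigma\rangle$, $T?$, $\varepsilon_1\sqcup\varepsilon_2$, $\mathrm{if}\ T\ \mathrm{then}\ \varepsilon_1\parallel\varepsilon_0$ (semantics: $J=I\circ\sigma$; $I\vDash T$ and $J=I$; either; as $\varepsilon_1$ if $I\vDash T$ else as $\varepsilon_0$); programs are lists of items with sequential composition; $\mathrm{if}\ T\ \mathrm{then}\ \varepsilon$ abbreviates $\mathrm{if}\ T\ \mathrm{then}\ \varepsilon\parallel[\,]$. $\varepsilon.C$ holds at $I$ iff $J\vDash C$ whenever $I\otimes J\vDash\varepsilon$; $\delta.(\varepsilon.C)=(\delta\varepsilon).C$; $\varepsilon.G=\{\varepsilon.C:C\in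 G\}$; static $C$ identified with $[\,].C$. $\varGamma@\varepsilon=\{\varPhi:\varepsilon.\varPhi\in\varGamma\}$, $\varGamma{\downarrow}=\{[\,].C\in\varGamma\}$. Reduct of a dynamic constraint: $\varPhi[\sigma]$ with $I\vDash\varPhi[\sigma]$ iff $I\circ\sigma\vDash\varPhi$ and $([\,].C)[\sigma]=[\,].C[\sigma]$. $\varGamma\vdash_{\mathrm{dyn}}\varPhi$ iff $\varGamma\Rightarrow\varPhi$ reduces by the rules (N1) $\varGamma\Rightarrow\langle\sigma\rangle.\varPhi\mapsto\varGamma\Rightarrow\varPhi[\sigma]$; (N2) $\varGamma\Rightarrow(\varepsilon_1\sqcup\varepsilon_2).\varPhi\mapsto\varGamma\Rightarrow\varepsilon_1.\varPhi$, $\varGamma\Rightarrow\varepsilon_2.\varPhi$; (N3) $\varGamma\Rightarrow T?.\varPhi\mapsto\varGamma\cup\{T\}\Rightarrow\varPhi$; (N4) $\varGamma\Rightarrow(\mathrm{if}\ T\ \mathrm{then}\ \varepsilon_1\parallel\varepsilon_0).\varPhi\mapsto\varGamma\cup\{T\}\Rightarrow\varepsilon_1.\varPhi$, $\varGamma\cup\{\overline T\}\Rightarrow\varepsilon_0.\varPhi$; (P1) $\varGamma\cup\langle\sigma\rangle.\varDelta\Rightarrow\varPhi\mapsto\varGamma\cup\varDelta[\sigma]\Rightarrow\varPhi$; (P2) $\varGamma\cup(\varepsilon_1\sqcup\varepsilon_2).\varDelta\Rightarrow\varPhi\mapsto\varGamma\cup\varepsilon_1.\varDelta\cup\varepsilon_2.\varDelta\Rightarrow\varPhi$;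 (P3) $\varGamma\cup T?.\varDelta\Rightarrow\varPhi\mapsto\varGamma\cup\varDelta\cup\{T\}\Rightarrow\varPhi$, $\varGamma\cup\{\overline T\}\Rightarrow\varPhi$; (P4) $\varGamma\cup(\mathrm{if}\ T\ \mathrm{then}\ \varepsilon_1\parallel\varepsilon_0).\varDelta\Rightarrow\varPhi\mapsto\varGamma\cup\varepsilon_1.\varDelta\cup\{T\}\Rightarrow\varPhi$, $\varGamma\cup\varepsilon_0.\varDelta\cup\{\overline T\}\Rightarrow\varPhi$, to implications $[\,].F_i\Rightarrow[\,].C_i$ with only empty contexts and $\vdash_\bot F_i\cup\{\overline{C_i}\}$ for all $i$. Proof terms: $\mathrm{qed}$, $\mathrm{elim}\,\pi$, $\mathrm{lem}(\varTheta,\rho)\,\pi$, $\mathrm{ctx}(\varepsilon,\rho)\,\pi$, with: $\mathrm{qed}:\varGamma\triangleright\varDelta$ iff $\varGamma{\downarrow}\vdash_{\mathrm{dyn}}\varPhi$ for all $\varPhi\in\varDelta$; $\mathrm{elim}\,\pi:\varGamma\triangleright\varDelta$ iff $\varGamma\vdash_{\mathrm{dyn}}\varPhi$ for all $\varPhi\in\varDelta{\downarrow}$ and $\pi:\varGamma\cup\varDelta{\downarrow}\triangleright\varDelta\setminus\varDelta{\downarrow}$; $\mathrm{lem}(\varTheta,\rho)\,\pi:\varGamma\triangleright\varDelta$ iff $\rho:\varGamma\triangleright\varTheta$ and $\pi:\varGamma\cup\varTheta\triangleright\varDelta\setminus\varTheta$; $\mathrm{ctx}(\varepsilon,\rho)\,\pi:\varGamma\triangleright\varDelta$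 iff $\rho:\varGamma@\varepsilon\triangleright\varDelta@\varepsilon$ and $\pi:\varGamma\cup\varepsilon.(\varDelta@\varepsilon)\triangleright\varDelta\setminus\varepsilon.(\varDelta@\varepsilon)$. Translation $\mathcal{T}$ (processing instructions from the front): $\mathcal{T}(F,[\,])=\mathrm{qed}$; $\mathcal{T}(F,\mathrm{rup}(C)\,\pi)=\mathrm{lem}(\{C\},\mathrm{qed})\,\mathcal{T}(F\cup\{C\},\pi)$; $\mathcal{T}(F,\mathrm{del}(C)\,\pi)=\mathcal{T}(F\setminus\{C\},\pi)$; $\mathcal{T}(F,\mathrm{sr}(C,\sigma)\,\pi)$ and $\mathcal{T}(F,\mathrm{wsr}(C,\sigma,G)\,\pi)$ both equal $\mathrm{lem}\big(\{\varepsilon.\bot\},\ \mathrm{lem}(\varepsilon.F',\mathrm{qed})\ \mathrm{ctx}(\varepsilon,\mathcal{T}(F',\pi))\ \mathrm{qed}\big)\ \mathrm{elim}\ \mathrm{qed}$, where $\varepsilon=\mathrm{if}\ \overline C\ \mathrm{then}\ \langle\sigma\rangle$ and $F'=F\cup\{C\}$ in the $\mathrm{sr}$ case, $F'=(F\setminus G)\cup\{C\}$ in the $\mathrm{wsr}$ case. *)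

theory Defs
  imports Main
begin

datatype 'v lit = Pos 'v | Neg 'v | LTop | LBot

fun lcompl :: "'v lit \<Rightarrow> 'v lit" where
  "lcompl (Pos x) = Neg x"
| "lcompl (Neg x) = Pos x"
| "lcompl LTop = LBot"
| "lcompl LBot = LTop"

type_synonym 'v subst = "'v \<Rightarrow> 'v lit"

fun slit :: "'v subst \<Rightarrow> 'v lit \<Rightarrow> 'v lit" where
  "slit \<sigma> (Pos x) = \<sigma> x"
| "slit \<sigma> (Neg x) = lcompl (\<sigma> x)"
| "slit \<sigma> LTop = LTop"
| "slit \<sigma> LBot = LBot"

text \<open>Composition used for reducts: (I o sigma) o tau = I o (scomp sigma tau).\<close>
definition scomp :: "'v subst \<Rightarrow> 'v subst \<Rightarrow> 'v subst" where
  "scomp \<sigma> \<tau> = (\<lambda>x. slit \<sigma> (\<tau> x))"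

datatype 'v constr = Clause "'v lit list" | Cube "'v lit list"

fun cneg :: "'v constr \<Rightarrow> 'v constr" where
  "cneg (Clause ls) = Cube (map lcompl ls)"
| "cneg (Cube ls) = Clause (map lcompl ls)"

fun csubst :: "'v constr \<Rightarrow> 'v subst \<Rightarrow> 'v constr" where
  "csubst (Clause ls) \<sigma> = Clause (map (slit \<sigma>) ls)"
| "csubst (Cube ls) \<sigma> = Cube (map (slit \<sigma>) ls)"

fun is_clause :: "'v constr \<Rightarrow> bool" where
  "is_clause (Clause _) = True"
| "is_clause (Cube _) = False"

definition botc :: "'v constr" where
  "botc = Clause [LBot]"

inductive_set UP :: "'v constr set \<Rightarrow> 'v lit set" for F where
  top: "LTop \<in> UP F"
| cube: "Cube ls \<in> F \<Longrightarrow> l \<in> set ls \<Longrightarrow> l \<in> UP F"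
| clause: "Clause ls \<in> F \<Longrightarrow> i < length ls \<Longrightarrow>
     (\<forall>j < length ls. j \<noteq> i \<longrightarrow> lcompl (ls ! j) \<in> UP F) \<Longrightarrow> ls ! i \<in> UP F"

definition conflict :: "'v constr set \<Rightarrow> bool" where
  "conflict F \<longleftrightarrow> LBot \<in> UP F
     \<or> (\<exists>x. Pos x \<in> UP F \<and> Neg x \<in> UP F)
     \<or> (\<exists>ls. Clause ls \<in> F \<and> (\<forall>l \<in> set ls. lcompl l \<in> UP F))"

definition rup :: "'v constr set \<Rightarrow> 'v constr \<Rightarrow> bool" where
  "rup F C \<longleftrightarrow> conflict (insert (cneg C) F)"

definition sr :: "'v constr set \<Rightarrow> 'v constr \<Rightarrow> 'v subst \<Rightarrow> bool" where
  "sr F C \<sigma> \<longleftrightarrow> conflict {cneg (csubst C \<sigma>)}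
     \<and> (\<forall>D \<in> F. conflict (F \<union> {cneg C, cneg (csubst D \<sigma>)}))"

definition wsr :: "'v constr set \<Rightarrow> 'v constr \<Rightarrow> 'v subst \<Rightarrow> 'v constr set \<Rightarrow> bool" where
  "wsr F C \<sigma> G \<longleftrightarrow>
     (\<forall>D \<in> (F - G) \<union> {C}. conflict (F \<union> {cneg C, cneg (csubst D \<sigma>)}))"

datatype 'v instr =
    Del "'v constr"
  | Rup "'v constr"
  | Sr "'v constr" "'v subst"
  | Wsr "'v constr" "'v subst" "'v constr set"

fun accf :: "'v constr set \<Rightarrow> 'v instr list \<Rightarrow> 'v constr set" where
  "accf F [] = F"
| "accf F (Del C # \<pi>) = accf (F - {C}) \<pi>"
| "accf F (Rup C # \<pi>) = accf (insert C F) \<pi>"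
| "accf F (Sr C \<sigma> # \<pi>) = accf (insert C F) \<pi>"
| "accf F (Wsr C \<sigma> G # \<pi>) = accf (insert C (F - G)) \<pi>"

fun derivation :: "'v constr set \<Rightarrow> 'v instr list \<Rightarrow> bool" where
  "derivation F [] = True"
| "derivation F (Del C # \<pi>) = derivation (F - {C}) \<pi>"
| "derivation F (Rup C # \<pi>) =
     (is_clause C \<and> rup F C \<and> derivation (insert C F) \<pi>)"
| "derivation F (Sr C \<sigma> # \<pi>) =
     (is_clause C \<and> sr F C \<sigma> \<and> derivation (insert C F) \<pi>)"
| "derivation F (Wsr C \<sigma> G # \<pi>) =
     (is_clause C \<and> wsr F C \<sigma> G \<and> derivation (insert C (F - G)) \<pi>)"

datatype 'v item =
    Subst "'v subst"
  | Test "'v constr"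
  | Choice "'v item list" "'v item list"
  | IfTE "'v constr" "'v item list" "'v item list"

text \<open>A dynamic constraint eps.C; since delta.(eps.C) = (delta eps).C it is a pair of a
  program (item list) and a static constraint; static C is Dyn [] C.\<close>
datatype 'v dyn = Dyn "'v item list" "'v constr"

fun dstatic :: "'v dyn \<Rightarrow> bool" where
  "dstatic (Dyn \<epsilon> C) = (\<epsilon> = [])"

definition dpre :: "'v item list \<Rightarrow> 'v dyn set \<Rightarrow> 'v dyn set" where
  "dpre \<epsilon> \<Gamma> = (\<lambda>\<Phi>. case \<Phi> of Dyn \<delta> C \<Rightarrow> Dyn (\<epsilon> @ \<delta>) C) ` \<Gamma>"

definition stat :: "'v constr set \<Rightarrow> 'v dyn set" where
  "stat F = Dyn [] ` F"

definition down :: "'v dyn set \<Rightarrow> 'v dyn set" where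
  "down \<Gamma> = {\<Phi> \<in> \<Gamma>. dstatic \<Phi>}"

definition dat :: "'v dyn set \<Rightarrow> 'v item list \<Rightarrow> 'v dyn set" where
  "dat \<Gamma> \<epsilon> = {Dyn \<delta> C | \<delta> C. Dyn (\<epsilon> @ \<delta>) C \<in> \<Gamma>}"

text \<open>Semantically I |= (red sigma eps).C iff (I o sigma) |= eps.C.\<close>
function (sequential) red :: "'v subst \<Rightarrow> 'v item list \<Rightarrow> 'v item list" where
  "red \<sigma> [] = [Subst \<sigma>]"
| "red \<sigma> (Subst \<tau> # \<epsilon>) = Subst (scomp \<sigma> \<tau>) # \<epsilon>"
| "red \<sigma> (Test T # \<epsilon>) = Test (csubst T \<sigma>) # red \<sigma> \<epsilon>"
| "red \<sigma> (Choice \<epsilon>1 \<epsilon>2 # \<epsilon>) = [Choice (red \<sigma> (\<epsilon>1 @ \<epsilon>)) (red \<sigma> (\<epsilon>2 @ \<epsilon>))]"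
| "red \<sigma> (IfTE T \<epsilon>1 \<epsilon>0 # \<epsilon>) =
     [IfTE (csubst T \<sigma>) (red \<sigma> (\<epsilon>1 @ \<epsilon>)) (red \<sigma> (\<epsilon>0 @ \<epsilon>))]"
  by pat_completeness auto
termination
  by (relation "measure (\<lambda>(\<sigma>, \<epsilon>). size_list size \<epsilon>)") auto

fun dred :: "'v subst \<Rightarrow> 'v dyn \<Rightarrow> 'v dyn" where
  "dred \<sigma> (Dyn \<epsilon> C) = (if \<epsilon> = [] then Dyn [] (csubst C \<sigma>) else Dyn (red \<sigma> \<epsilon>) C)"

text \<open>Gamma |-dyn Phi: Gamma => Phi reduces by rules N1-N4, P1-P4 to implications with
  only static constraints whose leaves are unit-propagation conflicts.\<close>
inductive dynd :: "'v dyn set \<Rightarrow> 'v dyn \<Rightarrow> bool" where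
  leaf: "(\<forall>\<Psi> \<in> \<Gamma>. dstatic \<Psi>) \<Longrightarrow> conflict (insert (cneg C) {D. Dyn [] D \<in> \<Gamma>})
          \<Longrightarrow> dynd \<Gamma> (Dyn [] C)"
| N1: "dynd \<Gamma> (dred \<sigma> (Dyn \<epsilon> C)) \<Longrightarrow> dynd \<Gamma> (Dyn (Subst \<sigma> # \<epsilon>) C)"
| N2: "dynd \<Gamma> (Dyn (\<epsilon>1 @ \<epsilon>) C) \<Longrightarrow> dynd \<Gamma> (Dyn (\<epsilon>2 @ \<epsilon>) C)
        \<Longrightarrow> dynd \<Gamma> (Dyn (Choice \<epsilon>1 \<epsilon>2 # \<epsilon>) C)"
| N3: "dynd (insert (Dyn [] T) \<Gamma>) (Dyn \<epsilon> C) \<Longrightarrow> dynd \<Gamma> (Dyn (Test T # \<epsilon>) C)"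
| N4: "dynd (insert (Dyn [] T) \<Gamma>) (Dyn (\<epsilon>1 @ \<epsilon>) C)
        \<Longrightarrow> dynd (insert (Dyn [] (cneg T)) \<Gamma>) (Dyn (\<epsilon>0 @ \<epsilon>) C)
        \<Longrightarrow> dynd \<Gamma> (Dyn (IfTE T \<epsilon>1 \<epsilon>0 # \<epsilon>) C)"
| P1: "\<Delta> \<noteq> {} \<Longrightarrow> dynd (\<Gamma> \<union> dred \<sigma> ` \<Delta>) \<Phi>
        \<Longrightarrow> dynd (\<Gamma> \<union> dpre [Subst \<sigma>] \<Delta>) \<Phi>"
| P2: "\<Delta> \<noteq> {} \<Longrightarrow> dynd (\<Gamma> \<union> dpre \<epsilon>1 \<Delta> \<union> dpre \<epsilon>2 \<Delta>) \<Phi>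
        \<Longrightarrow> dynd (\<Gamma> \<union> dpre [Choice \<epsilon>1 \<epsilon>2] \<Delta>) \<Phi>"
| P3: "\<Delta> \<noteq> {} \<Longrightarrow> dynd (\<Gamma> \<union> \<Delta> \<union> {Dyn [] T}) \<Phi>
        \<Longrightarrow> dynd (\<Gamma> \<union> {Dyn [] (cneg T)}) \<Phi>
        \<Longrightarrow> dynd (\<Gamma> \<union> dpre [Test T] \<Delta>) \<Phi>"
| P4: "\<Delta> \<noteq> {} \<Longrightarrow> dynd (\<Gamma> \<union> dpre \<epsilon>1 \<Delta> \<union> {Dyn [] T}) \<Phi>
        \<Longrightarrow> dynd (\<Gamma> \<union> dpre \<epsilon>0 \<Delta> \<union> {Dyn [] (cneg T)}) \<Phi>
        \<Longrightarrow> dynd (\<Gamma> \<union> dpre [IfTE T \<epsilon>1 \<epsilon>0] \<Delta>) \<Phi>"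

datatype 'v pterm =
    Qed
  | Elim "'v pterm"
  | Lem "'v dyn set" "'v pterm" "'v pterm"
  | Ctx "'v item list" "'v pterm" "'v pterm"

text \<open>derives pi Gamma Delta  stands for  pi : Gamma |> Delta.\<close>
fun derives :: "'v pterm \<Rightarrow> 'v dyn set \<Rightarrow> 'v dyn set \<Rightarrow> bool" where
  "derives Qed \<Gamma> \<Delta> = (\<forall>\<Phi> \<in> \<Delta>. dynd (down \<Gamma>) \<Phi>)"
| "derives (Elim \<pi>) \<Gamma> \<Delta> =
     ((\<forall>\<Phi> \<in> down \<Delta>. dynd \<Gamma> \<Phi>) \<and> derives \<pi> (\<Gamma> \<union> down \<Delta>) (\<Delta> - down \<Delta>))"
| "derives (Lem \<Theta> \<rho> \<pi>) \<Gamma> \<Delta> = (derives \<rho> \<Gamma> \<Theta> \<and> derives \<pi> (\<Gamma> \<union> \<Theta>) (\<Delta> - \<Theta>))"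
| "derives (Ctx \<epsilon> \<rho> \<pi>) \<Gamma> \<Delta> =
     (derives \<rho> (dat \<Gamma> \<epsilon>) (dat \<Delta> \<epsilon>)
      \<and> derives \<pi> (\<Gamma> \<union> dpre \<epsilon> (dat \<Delta> \<epsilon>)) (\<Delta> - dpre \<epsilon> (dat \<Delta> \<epsilon>)))"

definition srprog :: "'v constr \<Rightarrow> 'v subst \<Rightarrow> 'v item list" where
  "srprog C \<sigma> = [IfTE (cneg C) [Subst \<sigma>] []]"

fun translate :: "'v constr set \<Rightarrow> 'v instr list \<Rightarrow> 'v pterm" where
  "translate F [] = Qed"
| "translate F (Rup C # \<pi>) = Lem {Dyn [] C} Qed (translate (insert C F) \<pi>)"
| "translate F (Del C # \<pi>) = translate (F - {C}) \<pi>"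
| "translate F (Sr C \<sigma> # \<pi>) =
     (let \<epsilon> = srprog C \<sigma>; F' = insert C F in
      Lem {Dyn \<epsilon> botc} (Lem (dpre \<epsilon> (stat F')) Qed (Ctx \<epsilon> (translate F' \<pi>) Qed)) (Elim Qed))"
| "translate F (Wsr C \<sigma> G # \<pi>) =
     (let \<epsilon> = srprog C \<sigma>; F' = insert C (F - G) in
      Lem {Dyn \<epsilon> botc} (Lem (dpre \<epsilon> (stat F')) Qed (Ctx \<epsilon> (translate F' \<pi>) Qed)) (Elim Qed))"

end

theory Submission
  imports Defs
begin

lemma UP_mono: "l \<in> UP F \<Longrightarrow> F \<subseteq> G \<Longrightarrow> l \<in> UP G"
proof (induction rule: UP.induct)
  case top show ?case by (rule UP.top)
next
  case (cube ls l) then show ?case by (blast intro: UP.cube)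
next
  case (clause ls i) then show ?case by (blast intro: UP.clause)
qed

lemma conflict_mono: "conflict F \<Longrightarrow> F \<subseteq> G \<Longrightarrow> conflict G"
  unfolding conflict_def using UP_mono by blast

lemma lcompl_lcompl[simp]: "lcompl (lcompl l) = l"
  by (cases l) auto

lemma cneg_cneg[simp]: "cneg (cneg C) = C"
  by (cases C) (auto simp: comp_def)

lemma conflict_neg: "D \<in> S \<Longrightarrow> cneg D \<in> S \<Longrightarrow> conflict S"
proof (cases D)
  case (Clause ls)
  assume a: "D \<in> S" "cneg D \<in> S"
  then have "Cube (map lcompl ls) \<in> S" using Clause by simp
  then have "\<forall>l \<in> set ls. lcompl l \<in> UP S" by (auto intro: UP.cube)
  then show ?thesis using a Clause unfolding conflict_def by blast
next
  case (Cube ls)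
  assume a: "D \<in> S" "cneg D \<in> S"
  then have c: "Clause (map lcompl ls) \<in> S" using Cube by simp
  have "\<forall>l \<in> set ls. l \<in> UP S" using a Cube by (auto intro: UP.cube)
  then have "\<forall>l \<in> set (map lcompl ls). lcompl l \<in> UP S" by auto
  then show ?thesis using c unfolding conflict_def by blast
qed

lemma conflict_botc: "botc \<in> S \<Longrightarrow> conflict S"
  using UP.top[of S] unfolding conflict_def botc_def by fastforce

lemma leafI: "\<forall>\<psi>\<in>\<Gamma>. dstatic \<psi> \<Longrightarrow> conflict (insert (cneg C) F) \<Longrightarrow>
   F \<subseteq> {D. Dyn [] D \<in> \<Gamma>} \<Longrightarrow> dynd \<Gamma> (Dyn [] C)"
  apply (rule dynd.leaf, assumption)
  apply (erule conflict_mono)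
  by blast

lemma down_static: "\<forall>\<psi>\<in>\<Gamma>. dstatic \<psi> \<Longrightarrow> down \<Gamma> = \<Gamma>"
  unfolding down_def by auto

lemma stat_sub: "stat F \<subseteq> \<Gamma> \<Longrightarrow> F \<subseteq> {D. Dyn [] D \<in> \<Gamma>}"
  unfolding stat_def by auto

lemma static_iff: "dstatic \<psi> \<longleftrightarrow> (\<exists>C. \<psi> = Dyn [] C)"
  by (cases \<psi>) auto

lemma elim_step:
  assumes st: "\<forall>\<psi>\<in>\<Gamma>. dstatic \<psi>"
  shows "dynd (\<Gamma> \<union> {Dyn (srprog C \<sigma>) botc}) (Dyn [] botc)"
proof -
  have e: "\<Gamma> \<union> {Dyn (srprog C \<sigma>) botc} = \<Gamma> \<union> dpre [IfTE (cneg C) [Subst \<sigma>] []] {Dyn [] botc}"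
    unfolding srprog_def dpre_def by simp
  have 1: "dynd (\<Gamma> \<union> dpre [Subst \<sigma>] {Dyn [] botc} \<union> {Dyn [] (cneg C)}) (Dyn [] botc)"
  proof -
    have "dynd ((\<Gamma> \<union> {Dyn [] (cneg C)}) \<union> dred \<sigma> ` {Dyn [] botc}) (Dyn [] botc)"
      apply (rule leafI[where F="{botc}"])
      using st apply (auto simp: botc_def intro: conflict_botc)
      done
    then have "dynd ((\<Gamma> \<union> {Dyn [] (cneg C)}) \<union> dpre [Subst \<sigma>] {Dyn [] botc}) (Dyn [] botc)"
      by (intro dynd.P1) auto
    then show ?thesis by (simp add: Un_ac)
  qed
  have 2: "dynd (\<Gamma> \<union> dpre [] {Dyn [] botc} \<union> {Dyn [] (cneg (cneg C))}) (Dyn [] botc)"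
    apply (rule leafI[where F="{botc}"])
    using st apply (auto simp: dpre_def intro: conflict_botc)
    done
  show ?thesis unfolding e by (rule dynd.P4[OF _ 1 2]) simp
qed

lemma dat_stat: "\<epsilon> \<noteq> [] \<Longrightarrow> \<forall>\<psi>\<in>\<Gamma>. dstatic \<psi> \<Longrightarrow>
   dat (\<Gamma> \<union> dpre \<epsilon> (stat F)) \<epsilon> = stat F"
proof
  assume ne: "\<epsilon> \<noteq> []" and st: "\<forall>\<psi>\<in>\<Gamma>. dstatic \<psi>"
  show "dat (\<Gamma> \<union> dpre \<epsilon> (stat F)) \<epsilon> \<subseteq> stat F"
    using ne st unfolding dat_def dpre_def stat_def by (auto simp: static_iff)
  show "stat F \<subseteq> dat (\<Gamma> \<union> dpre \<epsilon> (stat F)) \<epsilon>"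
  proof
    fix x assume "x \<in> stat F"
    then obtain D where "D \<in> F" "x = Dyn [] D" unfolding stat_def by auto
    moreover have "Dyn (\<epsilon> @ []) D \<in> dpre \<epsilon> (stat F)"
      using \<open>D \<in> F\<close> unfolding dpre_def stat_def by force
    ultimately show "x \<in> dat (\<Gamma> \<union> dpre \<epsilon> (stat F)) \<epsilon>" unfolding dat_def by blast
  qed
qed

lemma ctx_step:
  assumes st: "\<forall>\<psi>\<in>\<Gamma>. dstatic \<psi>"
    and IH: "\<And>\<Gamma> \<Delta>. \<forall>\<psi>\<in>\<Gamma>. dstatic \<psi> \<Longrightarrow> stat F' \<subseteq> \<Gamma> \<Longrightarrow> \<Delta> \<subseteq> {Dyn [] botc}
       \<Longrightarrow> derives P \<Gamma> \<Delta>"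
  shows "derives (Ctx (srprog C \<sigma>) P Qed) (\<Gamma> \<union> dpre (srprog C \<sigma>) (stat F'))
           ({Dyn (srprog C \<sigma>) botc} - dpre (srprog C \<sigma>) (stat F'))"
proof -
  let ?e = "srprog C \<sigma>"
  have ne: "?e \<noteq> []" by (simp add: srprog_def)
  let ?D = "{Dyn ?e botc} - dpre ?e (stat F')"
  have d1: "dat ?D ?e \<subseteq> {Dyn [] botc}" unfolding dat_def by auto
  have d2: "?D - dpre ?e (dat ?D ?e) = {}" unfolding dat_def dpre_def by auto
  have "derives P (dat (\<Gamma> \<union> dpre ?e (stat F')) ?e) (dat ?D ?e)"
    unfolding dat_stat[OF ne st] by (rule IH[OF _ _ d1]) (auto simp: stat_def)
  then show ?thesis
    apply (subst derives.simps)
    apply (rule conjI, assumption)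
    apply (subst d2)
    apply simp
    done
qed

lemma main_gen:
  "derivation F \<pi> \<Longrightarrow> conflict (accf F \<pi>) \<Longrightarrow> \<forall>\<psi>\<in>\<Gamma>. dstatic \<psi> \<Longrightarrow> stat F \<subseteq> \<Gamma>
   \<Longrightarrow> \<Delta> \<subseteq> {Dyn [] botc} \<Longrightarrow> derives (translate F \<pi>) \<Gamma> \<Delta>"
proof (induction \<pi> arbitrary: F \<Gamma> \<Delta>)
  case Nil
  then show ?case
    using stat_sub[OF Nil(4)]
    by (auto simp: down_static intro!: leafI[where F=F] elim: conflict_mono)
next
  case (Cons i \<pi>)
  show ?case
  proof (cases i)
    case (Del C)
    then show ?thesis using Cons.IH[of "F - {C}" \<Gamma> \<Delta>] Cons.prems by (auto simp: stat_def)
  next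
    case (Rup C)
    have r: "rup F C" and d: "derivation (insert C F) \<pi>" using Cons Rup by auto
    have "dynd \<Gamma> (Dyn [] C)"
      apply (rule leafI[where F=F])
      using Cons(4) r stat_sub[OF Cons(5)] by (auto simp: rup_def)
    moreover have "derives (translate (insert C F) \<pi>) (\<Gamma> \<union> {Dyn [] C}) (\<Delta> - {Dyn [] C})"
      apply (rule Cons.IH[OF d])
      using Cons Rup by (auto simp: stat_def)
    ultimately show ?thesis using Rup Cons(4) by (simp add: down_static)
  next
    case (Sr C \<sigma>)
    let ?e = "srprog C \<sigma>"
    let ?F = "insert C F"
    have s: "sr F C \<sigma>" and d: "derivation ?F \<pi>" using Cons Sr by auto
    have Fs: "F \<subseteq> {D. Dyn [] D \<in> \<Gamma>}" using stat_sub[OF Cons(5)] .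
    have lem: "\<forall>\<Phi> \<in> dpre ?e (stat ?F). dynd \<Gamma> \<Phi>"
    proof
      fix \<Phi> assume "\<Phi> \<in> dpre ?e (stat ?F)"
      then obtain D where D: "D \<in> ?F" "\<Phi> = Dyn ?e D"
        unfolding dpre_def stat_def srprog_def by force
      have a: "dynd (insert (Dyn [] (cneg C)) \<Gamma>) (Dyn [Subst \<sigma>] D)"
        apply (rule dynd.N1)
        apply simp
        apply (rule leafI[where F="insert (cneg C) F"])
        using Cons(4) apply simp
        using D(1) s Fs apply (auto simp: sr_def elim: conflict_mono)
        done
      have b: "dynd (insert (Dyn [] (cneg (cneg C))) \<Gamma>) (Dyn [] D)"
        apply (rule leafI[where F="insert (cneg (cneg C)) F"])
        using Cons(4) apply simp
         apply (rule conflict_neg[where D=D]) using D(1) apply auto[2]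
        using Fs by auto
      show "dynd \<Gamma> \<Phi>" unfolding D(2) srprog_def
        using dynd.N4[of "cneg C" \<Gamma> "[Subst \<sigma>]" "[]" D "[]"] a b by simp
    qed
    have ctx: "derives (Ctx ?e (translate ?F \<pi>) Qed) (\<Gamma> \<union> dpre ?e (stat ?F))
           ({Dyn ?e botc} - dpre ?e (stat ?F))"
      apply (rule ctx_step[OF Cons(4)])
      apply (rule Cons.IH[OF d]) using Cons Sr by auto
    have el: "derives (Elim Qed) (\<Gamma> \<union> {Dyn ?e botc}) (\<Delta> - {Dyn ?e botc})"
      using elim_step[OF Cons(4), of C \<sigma>] Cons(6) by (auto simp: down_def)
    have q: "derives Qed \<Gamma> (dpre ?e (stat ?F))" using lem Cons(4) by (simp add: down_static)
    have t: "translate F (i # \<pi>) = Lem {Dyn ?e botc} (Lem (dpre ?e (stat ?F)) Qed (Ctx ?e (translate ?F \<pi>) Qed)) (Elim Qed)"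
      by (simp add: Sr Let_def)
    show ?thesis unfolding t
      apply (simp only: derives.simps(3))
      using q ctx el by blast
  next
    case (Wsr C \<sigma> G)
    let ?e = "srprog C \<sigma>"
    let ?F = "insert C (F - G)"
    have s: "wsr F C \<sigma> G" and d: "derivation ?F \<pi>" using Cons Wsr by auto
    have Fs: "F \<subseteq> {D. Dyn [] D \<in> \<Gamma>}" using stat_sub[OF Cons(5)] .
    have lem: "\<forall>\<Phi> \<in> dpre ?e (stat ?F). dynd \<Gamma> \<Phi>"
    proof
      fix \<Phi> assume "\<Phi> \<in> dpre ?e (stat ?F)"
      then obtain D where D: "D \<in> ?F" "\<Phi> = Dyn ?e D"
        unfolding dpre_def stat_def srprog_def by force
      have a: "dynd (insert (Dyn [] (cneg C)) \<Gamma>) (Dyn [Subst \<sigma>] D)"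
        apply (rule dynd.N1)
        apply simp
        apply (rule leafI[where F="insert (cneg C) F"])
        using Cons(4) apply simp
        using D(1) s Fs apply (auto simp: wsr_def elim: conflict_mono)
        done
      have b: "dynd (insert (Dyn [] (cneg (cneg C))) \<Gamma>) (Dyn [] D)"
        apply (rule leafI[where F="insert (cneg (cneg C)) F"])
        using Cons(4) apply simp
         apply (rule conflict_neg[where D=D]) using D(1) apply auto[2]
        using Fs by auto
      show "dynd \<Gamma> \<Phi>" unfolding D(2) srprog_def
        using dynd.N4[of "cneg C" \<Gamma> "[Subst \<sigma>]" "[]" D "[]"] a b by simp
    qed
    have ctx: "derives (Ctx ?e (translate ?F \<pi>) Qed) (\<Gamma> \<union> dpre ?e (stat ?F))
           ({Dyn ?e botc} - dpre ?e (stat ?F))"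
      apply (rule ctx_step[OF Cons(4)])
      apply (rule Cons.IH[OF d]) using Cons Wsr by auto
    have el: "derives (Elim Qed) (\<Gamma> \<union> {Dyn ?e botc}) (\<Delta> - {Dyn ?e botc})"
      using elim_step[OF Cons(4), of C \<sigma>] Cons(6) by (auto simp: down_def)
    have q: "derives Qed \<Gamma> (dpre ?e (stat ?F))" using lem Cons(4) by (simp add: down_static)
    have t: "translate F (i # \<pi>) = Lem {Dyn ?e botc} (Lem (dpre ?e (stat ?F)) Qed (Ctx ?e (translate ?F \<pi>) Qed)) (Elim Qed)"
      by (simp add: Wsr Let_def)
    show ?thesis unfolding t
      apply (simp only: derives.simps(3))
      using q ctx el by blast
  qed
qed

theorem mainTheorem6:
  fixes F :: "'v constr set" and \<pi> :: "'v instr list"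
  assumes "finite F"
    and "derivation F \<pi>"
    and "conflict (accf F \<pi>)"
  shows "derives (translate F \<pi>) (stat F) {Dyn [] botc}"
  by (rule main_gen[OF assms(2,3)]) (auto simp: stat_def)

end
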